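(* Let $0\le k\le n$ and $\lambda,\mu\vdash n$. Then $$m\big((\lambda,\mu),\alpha_{H_n^k}\big)=\big\langle\chi_\lambda\downarrow^{S_n}_{S_{n-k}},\chi_\mu\downarrow^{S_n}_{S_{n-k}}\big\rangle_{S_{n-k}},$$ that is, $\alpha_{H_n^k}\cong\bigoplus_{\lambda,\mu\vdash n}\langle\chi_\lambda\downarrow^{S_n}_{S_{n-k}},\chi_\mu\downarrow^{S_n}_{S_{n-k}}\rangle\, S^\lambda\otimes S^\mu$.
   Context: Permutations are composed as functions, and $\pi\in S_n$ is identified with the permutation matrix whose $(i,j)$ entry is $1$ iff $i=\pi(j)$. For $A\in GL_n(\mathbb{Z}_2)$ let $\eta(A)$ (resp. $\theta(A)$) be the partition obtained by sorting the row sums (resp. column sums) of $A$, computed as integers, in weakly decreasing order. For $0\le k\le n$, $H_n^k=\{A\in GL_n(\mathbb{Z}_2)\mid \eta(A)=(n,n-1,\dots,n-k+1,1^{n-k}),\ \theta(A)=((k+1)^{n-k},k,k-1,\dots,1)\}$. $\alpha_{H_n^k}$ is the complex permutation representation of $S_n\times S_n$ on the space with basis $H_n^k$ given by $(\pi,\sigma)\bullet A=\pi A\sigma^{-1}$. $m((\lambda,\mu),\varphi)$ is the multiplicity of the irreducible $S_n\times S_n$-module $S^\lambda\otimes S^\mu$ in $\varphi$. $\chi_\lambda$ is the irreducible character of $S_n$ indexed by $\lambda$; $S_{n-k}$ is embedded in $S_n$ as the permutations fixing $1,\dots,k$; $\langle\cdot,\cdot\rangle_{S_{n-k}}$ is the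 standard inner product of class functions on $S_{n-k}$. *)

theory Defs
  imports Complex_Main "HOL-Combinatorics.Permutations" "HOL-Library.FuncSet"
begin

text \<open>A matrix over Z_2 is a function nat => nat => bool (True = 1),
  extensional: False outside {1..n} x {1..n}.\<close>

definition mats :: "nat \<Rightarrow> (nat \<Rightarrow> nat \<Rightarrow> bool) set" where
  "mats n = {A. \<forall>i j. A i j \<longrightarrow> i \<in> {1..n} \<and> j \<in> {1..n}}"

definition gf2_mult :: "nat \<Rightarrow> (nat \<Rightarrow> nat \<Rightarrow> bool) \<Rightarrow> (nat \<Rightarrow> nat \<Rightarrow> bool) \<Rightarrow> (nat \<Rightarrow> nat \<Rightarrow> bool)" where
  "gf2_mult n A B = (\<lambda>i j. i \<in> {1..n} \<and> j \<in> {1..n} \<and>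
      odd (card {l \<in> {1..n}. A i l \<and> B l j}))"

definition id_mat :: "nat \<Rightarrow> (nat \<Rightarrow> nat \<Rightarrow> bool)" where
  "id_mat n = (\<lambda>i j. i \<in> {1..n} \<and> i = j)"

definition GL2 :: "nat \<Rightarrow> (nat \<Rightarrow> nat \<Rightarrow> bool) set" where
  "GL2 n = {A \<in> mats n. \<exists>B \<in> mats n. gf2_mult n A B = id_mat n \<and> gf2_mult n B A = id_mat n}"

definition perm_mat :: "nat \<Rightarrow> (nat \<Rightarrow> nat) \<Rightarrow> (nat \<Rightarrow> nat \<Rightarrow> bool)" where
  "perm_mat n p = (\<lambda>i j. i \<in> {1..n} \<and> j \<in> {1..n} \<and> i = p j)"

definition act :: "nat \<Rightarrow> (nat \<Rightarrow> nat) \<Rightarrow> (nat \<Rightarrow> nat) \<Rightarrow> (nat \<Rightarrow> nat \<Rightarrow> bool) \<Rightarrow> (nat \<Rightarrow> nat \<Rightarrow> bool)" where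
  "act n p s A = gf2_mult n (gf2_mult n (perm_mat n p) A) (perm_mat n (inv s))"

definition row_sum :: "nat \<Rightarrow> (nat \<Rightarrow> nat \<Rightarrow> bool) \<Rightarrow> nat \<Rightarrow> nat" where
  "row_sum n A i = card {j \<in> {1..n}. A i j}"

definition col_sum :: "nat \<Rightarrow> (nat \<Rightarrow> nat \<Rightarrow> bool) \<Rightarrow> nat \<Rightarrow> nat" where
  "col_sum n A j = card {i \<in> {1..n}. A i j}"

definition eta :: "nat \<Rightarrow> (nat \<Rightarrow> nat \<Rightarrow> bool) \<Rightarrow> nat list" where
  "eta n A = rev (sort (map (row_sum n A) [1..<n+1]))"

definition theta :: "nat \<Rightarrow> (nat \<Rightarrow> nat \<Rightarrow> bool) \<Rightarrow> nat list" where
  "theta n A = rev (sort (map (col_sum n A) [1..<n+1]))"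

definition H :: "nat \<Rightarrow> nat \<Rightarrow> (nat \<Rightarrow> nat \<Rightarrow> bool) set" where
  "H n k = {A \<in> GL2 n.
      eta n A = map (\<lambda>i. n - i) [0..<k] @ replicate (n - k) 1 \<and>
      theta n A = replicate (n - k) (k + 1) @ map (\<lambda>i. k - i) [0..<k]}"

definition is_partition :: "nat \<Rightarrow> nat list \<Rightarrow> bool" where
  "is_partition n la \<longleftrightarrow> sorted_wrt (\<ge>) la \<and> 0 \<notin> set la \<and> sum_list la = n"

text \<open>Permutation character of S_n on ordered set partitions of {1..n} of
  type alpha (the character of the Young permutation module M^alpha):
  number of maps f : {1..n} -> {0..<l} with fibre sizes alpha that are
  constant on cycles of sigma; zero if some entry is negative.\<close>
definition young_perm_char :: "nat \<Rightarrow> int list \<Rightarrow> (nat \<Rightarrow> nat) \<Rightarrow> int" where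
  "young_perm_char n al sg =
     (if \<exists>a \<in> set al. a < 0 then 0 else
      int (card {f \<in> {1..n} \<rightarrow>\<^sub>E {0..<length al}.
          (\<forall>i < length al. int (card {x \<in> {1..n}. f x = i}) = al ! i) \<and>
          (\<forall>x \<in> {1..n}. f (sg x) = f x)}))"

text \<open>Irreducible character chi_lambda of S_n, defined by the
  determinantal (Jacobi-Trudi / Frobenius) formula
  chi_lambda = det (phi^(lambda_i - i + j))_{i,j}.\<close>
definition irr_char :: "nat \<Rightarrow> nat list \<Rightarrow> (nat \<Rightarrow> nat) \<Rightarrow> int" where
  "irr_char n la sg =
     (\<Sum>w \<in> {w. w permutes {0..<length la}}.
        sign w * young_perm_char n
          (map (\<lambda>i. int (la ! i) - int i + int (w i)) [0..<length la]) sg)"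

text \<open>Multiplicity of S^lambda (x) S^mu in the permutation representation of
  S_n x S_n on the set H_n^k: the inner product of its character
  (number of fixed points) with chi_lambda x chi_mu.\<close>
definition mult_H :: "nat \<Rightarrow> nat \<Rightarrow> nat list \<Rightarrow> nat list \<Rightarrow> real" where
  "mult_H n k la mu =
     (\<Sum>p \<in> {p. p permutes {1..n}}. \<Sum>s \<in> {s. s permutes {1..n}}.
        real_of_int (irr_char n la p * irr_char n mu s) *
        real (card {A \<in> H n k. act n p s A = A})) / (real (fact n))^2"

text \<open>Inner product of restrictions to S_{n-k} (permutations fixing 1..k).\<close>
definition restr_ip :: "nat \<Rightarrow> nat \<Rightarrow> nat list \<Rightarrow> nat list \<Rightarrow> real" where
  "restr_ip n k la mu =
     (\<Sum>t \<in> {t. t permutes {k+1..n}}.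
        real_of_int (irr_char n la t * irr_char n mu t)) / real (fact (n - k))"

end

theory Submission
  imports Defs
begin

definition Z :: "nat \<Rightarrow> nat \<Rightarrow> nat \<Rightarrow> bool" where
  "Z k i j = ((i \<le> k \<and> i \<le> j) \<or> (k < i \<and> i = j))"

lemma card_perm_filter:
  assumes v: "v permutes {1..n}"
  shows "card {j \<in> {1..n}. P (v j)} = card {j \<in> {1..n}. P j}"
proof -
  have "v ` {j \<in> {1..n}. P (v j)} = {j \<in> {1..n}. P j}"
  proof (intro equalityI subsetI)
    fix y assume "y \<in> v ` {j \<in> {1..n}. P (v j)}" then show "y \<in> {j \<in> {1..n}. P j}"
      using permutes_in_image[OF v] by auto
  next
    fix y assume y: "y \<in> {j \<in> {1..n}. P j}"
    have "inv v y \<in> {1..n}" using y permutes_in_image[OF permutes_inv[OF v]] by auto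
    moreover have "v (inv v y) = y" using permutes_inverses[OF v] by simp
    ultimately show "y \<in> v ` {j \<in> {1..n}. P (v j)}" using y by (intro image_eqI[where x="inv v y"]) auto
  qed
  moreover have "card (v ` {j \<in> {1..n}. P (v j)}) = card {j \<in> {1..n}. P (v j)}"
    using permutes_inj_on[OF v] by (rule card_image)
  ultimately show ?thesis by simp
qed

lemma Z_row: assumes "i \<in> {1..n}" "k \<le> n"
  shows "card {j \<in> {1..n}. Z k i j} = (if i \<le> k then n + 1 - i else 1)"
proof (cases "i \<le> k")
  case True
  then have "{j \<in> {1..n}. Z k i j} = {i..n}" using assms by (auto simp: Z_def)
  then show ?thesis using True by simp
next
  case False
  then have "{j \<in> {1..n}. Z k i j} = {i}" using assms by (auto simp: Z_def)
  then show ?thesis using False by simp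
qed

lemma Z_col: assumes "j \<in> {1..n}" "k \<le> n"
  shows "card {i \<in> {1..n}. Z k i j} = (if j \<le> k then j else k + 1)"
proof (cases "j \<le> k")
  case True
  then have "{i \<in> {1..n}. Z k i j} = {1..j}" using assms by (auto simp: Z_def)
  then show ?thesis using True by simp
next
  case False
  then have "{i \<in> {1..n}. Z k i j} = insert j {1..k}" using assms by (auto simp: Z_def)
  then show ?thesis using False by simp
qed

lemma stab0:
  assumes u: "u permutes {1..n}" and v: "v permutes {1..n}" and k: "k \<le> n"
  shows "(\<forall>i\<in>{1..n}. \<forall>j\<in>{1..n}. Z k (u i) (v j) = Z k i j) \<longleftrightarrow> (u = v \<and> u permutes {k+1..n})"
proof
  assume H: "\<forall>i\<in>{1..n}. \<forall>j\<in>{1..n}. Z k (u i) (v j) = Z k i j"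
  have uin: "\<And>x. u x \<in> {1..n} \<longleftrightarrow> x \<in> {1..n}" using permutes_in_image[OF u] by blast
  have vin: "\<And>x. v x \<in> {1..n} \<longleftrightarrow> x \<in> {1..n}" using permutes_in_image[OF v] by blast
  have ufix: "u i = i" if i: "i \<in> {1..n}" "i \<le> k" for i
  proof -
    have "card {j \<in> {1..n}. Z k (u i) (v j)} = card {j \<in> {1..n}. Z k i j}"
      using H i by (intro arg_cong[where f=card]) auto
    also have "card {j \<in> {1..n}. Z k (u i) (v j)} = card {j \<in> {1..n}. Z k (u i) j}"
      by (rule card_perm_filter[OF v])
    finally have e: "card {j \<in> {1..n}. Z k (u i) j} = card {j \<in> {1..n}. Z k i j}" .
    have ui: "u i \<in> {1..n}" using i uin by blast
    show ?thesis using e Z_row[OF ui k] Z_row[OF i(1) k] i ui by (auto split: if_splits)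
  qed
  have vfix: "v j = j" if j: "j \<in> {1..n}" "j \<le> k" for j
  proof -
    have "card {i \<in> {1..n}. Z k (u i) (v j)} = card {i \<in> {1..n}. Z k i j}"
      using H j by (intro arg_cong[where f=card]) auto
    also have "card {i \<in> {1..n}. Z k (u i) (v j)} = card {i \<in> {1..n}. Z k i (v j)}"
      by (rule card_perm_filter[OF u])
    finally have e: "card {i \<in> {1..n}. Z k i (v j)} = card {i \<in> {1..n}. Z k i j}" .
    have vj: "v j \<in> {1..n}" using j vin by blast
    show ?thesis using e Z_col[OF vj k] Z_col[OF j(1) k] j vj by (auto split: if_splits)
  qed
  have uhi: "k < u i" if i: "i \<in> {1..n}" "k < i" for i
  proof (rule ccontr)
    assume "\<not> k < u i"
    then have "u i \<le> k" by simp
    moreover have "u i \<in> {1..n}" using i(1) uin by blast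
    ultimately have "u (u i) = u i" using ufix by blast
    then have "u i = i" using permutes_inj[OF u] by (simp add: inj_eq)
    then show False using i \<open>u i \<le> k\<close> by simp
  qed
  have uv: "u = v"
  proof (rule ext)
    fix x show "u x = v x"
    proof (cases "x \<in> {1..n}")
      case False then show ?thesis using permutes_not_in[OF u] permutes_not_in[OF v] by simp
    next
      case True
      show ?thesis
      proof (cases "x \<le> k")
        case True' : True
        then show ?thesis using ufix vfix True by simp
      next
        case False
        have "Z k x x" by (auto simp: Z_def)
        then have "Z k (u x) (v x)" using H True by blast
        then show ?thesis using uhi[OF True] False by (simp add: Z_def)
      qed
    qed
  qed
  have "u permutes {k+1..n}"
    unfolding permutes_def
  proof (intro conjI allI impI)
    fix x assume "x \<notin> {k+1..n}"
    then show "u x = x" using ufix[of x] permutes_not_in[OF u, of x] by (cases "x \<in> {1..n}") auto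
  next
    fix y show "\<exists>!x. u x = y" using u unfolding permutes_def by blast
  qed
  then show "u = v \<and> u permutes {k+1..n}" using uv by blast
next
  assume "u = v \<and> u permutes {k+1..n}"
  then have uv: "u = v" and t: "u permutes {k+1..n}" by auto
  show "\<forall>i\<in>{1..n}. \<forall>j\<in>{1..n}. Z k (u i) (v j) = Z k i j"
  proof (intro ballI)
    fix i j assume i: "i \<in> {1..n}" and j: "j \<in> {1..n}"
    have fx: "\<And>x. x \<le> k \<Longrightarrow> u x = x" using permutes_not_in[OF t] by simp
    have hi: "\<And>x. x \<in> {1..n} \<Longrightarrow> k < x \<Longrightarrow> k < u x"
      using permutes_in_image[OF t] by (metis Suc_eq_plus1 Suc_le_eq atLeastAtMost_iff)
    show "Z k (u i) (v j) = Z k i j"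
    proof (cases "i \<le> k")
      case True
      then show ?thesis using fx hi[OF j] j uv by (cases "j \<le> k") (auto simp: Z_def)
    next
      case False
      then show ?thesis using hi[OF i] permutes_inj[OF t] uv by (auto simp: Z_def dest: injD)
    qed
  qed
qed

lemma struct_base:
  fixes M :: "nat \<Rightarrow> nat \<Rightarrow> bool"
  assumes fR: "finite R" and fC: "finite C" and cR: "card R = m" and cC: "card C = m"
    and rows: "\<And>i. i \<in> R \<Longrightarrow> card {j \<in> C. M i j} = 1"
    and cols: "\<And>j. j \<in> C \<Longrightarrow> card {i \<in> R. M i j} = 1"
  shows "\<exists>\<sigma> \<tau>. bij_betw \<sigma> {1..m} R \<and> bij_betw \<tau> {1..m} C \<and>
     (\<forall>i\<in>{1..m}. \<forall>j\<in>{1..m}. M (\<sigma> i) (\<tau> j) = Z 0 i j)"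
proof -
  have "\<forall>i\<in>R. \<exists>j. {j' \<in> C. M i j'} = {j}" using rows by (metis card_1_singletonE)
  then obtain f where f: "\<And>i. i \<in> R \<Longrightarrow> {j' \<in> C. M i j'} = {f i}" by metis
  have fC': "\<And>i. i \<in> R \<Longrightarrow> f i \<in> C \<and> M i (f i)" using f by blast
  have finj: "inj_on f R"
  proof (rule inj_onI)
    fix a b assume a: "a \<in> R" and b: "b \<in> R" and e: "f a = f b"
    have "{i \<in> R. M i (f a)} \<supseteq> {a, b}" using fC'[OF a] fC'[OF b] e a b by auto
    moreover have "card {i \<in> R. M i (f a)} = 1" using cols fC'[OF a] by blast
    moreover have "finite {i \<in> R. M i (f a)}" using fR by simp
    ultimately show "a = b"
      by (metis card_1_singletonE insert_subset singletonD)
  qed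
  have "f ` R \<subseteq> C" using fC' by blast
  moreover have "card (f ` R) = card C" using card_image[OF finj] cR cC by simp
  ultimately have fRC: "f ` R = C" using fC by (simp add: card_subset_eq)
  have fb: "bij_betw f R C" using finj fRC by (simp add: bij_betw_def)
  obtain \<sigma> where s: "bij_betw \<sigma> {1..card R} R" using ex_bij_betw_nat_finite_1[OF fR] by blast
  then have s': "bij_betw \<sigma> {1..m} R" using cR by simp
  have t: "bij_betw (f \<circ> \<sigma>) {1..m} C" using bij_betw_trans[OF s' fb] .
  have "M (\<sigma> i) ((f \<circ> \<sigma>) j) = Z 0 i j" if i: "i \<in> {1..m}" and j: "j \<in> {1..m}" for i j
  proof -
    have si: "\<sigma> i \<in> R" and sj: "\<sigma> j \<in> R" using s' i j by (auto simp: bij_betw_def)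
    have "M (\<sigma> i) (f (\<sigma> j)) \<longleftrightarrow> f (\<sigma> j) = f (\<sigma> i)"
      using f[OF si] fC'[OF sj] by blast
    also have "\<dots> \<longleftrightarrow> \<sigma> j = \<sigma> i" using finj si sj by (auto dest: inj_onD)
    also have "\<dots> \<longleftrightarrow> j = i" using s' i j by (auto simp: bij_betw_def dest: inj_onD)
    finally show ?thesis using i by (auto simp: Z_def)
  qed
  then show ?thesis using s' t by blast
qed

lemma bij_shift:
  fixes m :: nat
  assumes g: "bij_betw g {1..m-1} (A - {a})" and a: "a \<in> A" and m: "1 \<le> m"
  shows "bij_betw (\<lambda>i. if i = 1 then a else g (i - 1)) {1..m} A"
proof -
  let ?h = "\<lambda>i. if i = 1 then a else g (i - 1)"
  have gi: "\<And>i. i \<in> {1..m-1} \<Longrightarrow> g i \<in> A - {a}" using g by (auto simp: bij_betw_def)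
  have inj: "inj_on ?h {1..m}"
  proof (rule inj_onI)
    fix x y assume x: "x \<in> {1..m}" and y: "y \<in> {1..m}" and e: "?h x = ?h y"
    show "x = y"
    proof (cases "x = 1"; cases "y = 1")
      assume "x \<noteq> 1" "y \<noteq> 1"
      then have "g (x - 1) = g (y - 1)" using e by simp
      moreover have "x - 1 \<in> {1..m-1}" "y - 1 \<in> {1..m-1}" using x y \<open>x \<noteq> 1\<close> \<open>y \<noteq> 1\<close> by auto
      ultimately have "x - 1 = y - 1" using g by (metis bij_betw_def inj_onD)
      then show ?thesis using \<open>x \<noteq> 1\<close> \<open>y \<noteq> 1\<close> x y by simp
    next
      assume "x = 1" "y \<noteq> 1"
      moreover have "y - 1 \<in> {1..m-1}" using y \<open>y \<noteq> 1\<close> by auto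
      ultimately show ?thesis using e gi[of "y - 1"] by auto
    next
      assume "x \<noteq> 1" "y = 1"
      moreover have "x - 1 \<in> {1..m-1}" using x \<open>x \<noteq> 1\<close> by auto
      ultimately show ?thesis using e gi[of "x - 1"] by auto
    qed simp
  qed
  have img: "?h ` {1..m} = A"
  proof (intro equalityI subsetI)
    fix z assume "z \<in> ?h ` {1..m}"
    then obtain x where x: "x \<in> {1..m}" "z = ?h x" by blast
    show "z \<in> A"
    proof (cases "x = 1")
      case True then show ?thesis using a x by simp
    next
      case False
      then have "x - 1 \<in> {1..m-1}" using x by auto
      then show ?thesis using gi[of "x - 1"] x False by auto
    qed
  next
    fix z assume z: "z \<in> A"
    show "z \<in> ?h ` {1..m}"
    proof (cases "z = a")
      case True then show ?thesis using m by (intro image_eqI[where x=1]) auto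
    next
      case False
      then have "z \<in> g ` {1..m-1}" using z g by (auto simp: bij_betw_def)
      then obtain y where y: "y \<in> {1..m-1}" "z = g y" by blast
      then show ?thesis by (intro image_eqI[where x="y+1"]) auto
    qed
  qed
  show ?thesis using inj img by (simp add: bij_betw_def)
qed

lemma struct:
  fixes M :: "nat \<Rightarrow> nat \<Rightarrow> bool"
  assumes "finite R" "finite C" "card R = m" "card C = m" "k \<le> m"
    "image_mset (\<lambda>i. card {j \<in> C. M i j}) (mset_set R) = mset (map (\<lambda>i. m - i) [0..<k] @ replicate (m - k) 1)"
    "image_mset (\<lambda>j. card {i \<in> R. M i j}) (mset_set C) = mset (replicate (m - k) (k + 1) @ map (\<lambda>i. k - i) [0..<k])"
  shows "\<exists>\<sigma> \<tau>. bij_betw \<sigma> {1..m} R \<and> bij_betw \<tau> {1..m} C \<and>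
     (\<forall>i\<in>{1..m}. \<forall>j\<in>{1..m}. M (\<sigma> i) (\<tau> j) = Z k i j)"
  using assms
proof (induction k arbitrary: m R C)
  case 0
  have rows: "card {j \<in> C. M i j} = 1" if "i \<in> R" for i
  proof -
    have "card {j \<in> C. M i j} \<in># image_mset (\<lambda>i. card {j \<in> C. M i j}) (mset_set R)"
      using that "0.prems"(1) by simp
    moreover have "0 < card R" using that 0 by (auto simp: card_gt_0_iff)
    ultimately show ?thesis using 0 by simp
  qed
  have cols: "card {i \<in> R. M i j} = 1" if "j \<in> C" for j
  proof -
    have "card {i \<in> R. M i j} \<in># image_mset (\<lambda>j. card {i \<in> R. M i j}) (mset_set C)"
      using that "0.prems"(2) by simp
    moreover have "0 < card C" using that 0 by (auto simp: card_gt_0_iff)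
    ultimately show ?thesis using 0 by simp
  qed
  show ?case using struct_base[OF "0.prems"(1-4) rows cols] by blast
next
  case (Suc k)
  note fR = Suc.prems(1) and fC = Suc.prems(2) and cR = Suc.prems(3) and cC = Suc.prems(4)
    and km = Suc.prems(5) and rm = Suc.prems(6) and cm = Suc.prems(7)
  let ?rf = "\<lambda>i. card {j \<in> C. M i j}"
  let ?cf = "\<lambda>j. card {i \<in> R. M i j}"
  have m1: "1 \<le> m" using km by simp
  have "m \<in># image_mset ?rf (mset_set R)" unfolding rm by (simp del: upt_Suc add: upt_conv_Cons)
  then obtain r where r: "r \<in> R" "?rf r = m" using fR by auto
  have rowr: "{j \<in> C. M r j} = C"
    using r(2) cC fC by (intro card_subset_eq) auto
  have "1 \<in># image_mset ?cf (mset_set C)" unfolding cm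
    by (simp add: image_iff)
  then obtain c where c: "c \<in> C" "?cf c = 1" using fC by auto
  have colc: "{i \<in> R. M i c} = {r}"
  proof -
    have "r \<in> {i \<in> R. M i c}" using rowr c r by blast
    moreover obtain x where "{i \<in> R. M i c} = {x}" using c(2) by (metis card_1_singletonE)
    ultimately show ?thesis by auto
  qed
  define R' where "R' = R - {r}"
  define C' where "C' = C - {c}"
  have fR': "finite R'" and fC': "finite C'" using fR fC by (auto simp: R'_def C'_def)
  have cR': "card R' = m - 1" using cR r fR by (simp add: R'_def)
  have cC': "card C' = m - 1" using cC c fC by (simp add: C'_def)
  have km': "k \<le> m - 1" using km by simp
  have msR: "mset_set R' = mset_set R - {#r#}"
    using mset_set_Diff[OF fR, of "{r}"] r by (simp add: R'_def)
  have msC: "mset_set C' = mset_set C - {#c#}"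
    using mset_set_Diff[OF fC, of "{c}"] c by (simp add: C'_def)
  have rm': "image_mset (\<lambda>i. card {j \<in> C'. M i j}) (mset_set R') =
      mset (map (\<lambda>i. (m - 1) - i) [0..<k] @ replicate ((m - 1) - k) 1)"
  proof -
    have "image_mset (\<lambda>i. card {j \<in> C'. M i j}) (mset_set R') = image_mset ?rf (mset_set R')"
    proof (rule image_mset_cong)
      fix i assume "i \<in># mset_set R'"
      then have i: "i \<in> R'" using fR' by simp
      then have "\<not> M i c" using colc by (auto simp: R'_def)
      then have "{j \<in> C'. M i j} = {j \<in> C. M i j}" by (auto simp: C'_def)
      then show "card {j \<in> C'. M i j} = ?rf i" by simp
    qed
    also have "\<dots> = image_mset ?rf (mset_set R) - {#m#}"
      unfolding msR using r by (subst image_mset_Diff) (auto simp: fR)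
    also have "\<dots> = mset (map (\<lambda>i. (m - 1) - i) [0..<k] @ replicate ((m - 1) - k) 1)"
      unfolding rm by (simp add: map_upt_Suc del: upt_Suc)
    finally show ?thesis .
  qed
  have cm': "image_mset (\<lambda>j. card {i \<in> R'. M i j}) (mset_set C') =
      mset (replicate ((m - 1) - k) (k + 1) @ map (\<lambda>i. k - i) [0..<k])"
  proof -
    have "image_mset (\<lambda>j. card {i \<in> R'. M i j}) (mset_set C') = image_mset (\<lambda>x. x - 1) (image_mset ?cf (mset_set C'))"
      unfolding image_mset.compositionality
    proof (rule image_mset_cong)
      fix j assume "j \<in># mset_set C'"
      then have j: "j \<in> C" using fC' by (simp add: C'_def)
      then have "M r j" using rowr by blast
      then have "{i \<in> R'. M i j} = {i \<in> R. M i j} - {r}" by (auto simp: R'_def)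
      moreover have "r \<in> {i \<in> R. M i j}" using \<open>M r j\<close> r by blast
      ultimately show "card {i \<in> R'. M i j} = ((\<lambda>x. x - 1) \<circ> ?cf) j" using fR by simp
    qed
    also have "image_mset ?cf (mset_set C') = image_mset ?cf (mset_set C) - {#1#}"
      unfolding msC using c by (subst image_mset_Diff) (auto simp: fC)
    also have "image_mset (\<lambda>x. x - 1) (image_mset ?cf (mset_set C) - {#1#}) =
        mset (replicate ((m - 1) - k) (k + 1) @ map (\<lambda>i. k - i) [0..<k])"
      unfolding cm by (simp add: image_mset.compositionality o_def)
    finally show ?thesis .
  qed
  obtain \<sigma>' \<tau>' where s': "bij_betw \<sigma>' {1..m-1} R'" and t': "bij_betw \<tau>' {1..m-1} C'"
    and Z': "\<forall>i\<in>{1..m-1}. \<forall>j\<in>{1..m-1}. M (\<sigma>' i) (\<tau>' j) = Z k i j"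
    using Suc.IH[OF fR' fC' cR' cC' km' rm' cm'] by blast
  define \<sigma> where "\<sigma> = (\<lambda>i. if i = 1 then r else \<sigma>' (i - 1))"
  define \<tau> where "\<tau> = (\<lambda>i. if i = 1 then c else \<tau>' (i - 1))"
  have s: "bij_betw \<sigma> {1..m} R" unfolding \<sigma>_def using bij_shift[OF s'[unfolded R'_def] r(1) m1] .
  have t: "bij_betw \<tau> {1..m} C" unfolding \<tau>_def using bij_shift[OF t'[unfolded C'_def] c(1) m1] .
  have "M (\<sigma> i) (\<tau> j) = Z (Suc k) i j" if i: "i \<in> {1..m}" and j: "j \<in> {1..m}" for i j
  proof (cases "i = 1")
    case True
    have "M r (\<tau> j)" using t j rowr by (auto simp: bij_betw_def)
    then show ?thesis using True j by (simp add: \<sigma>_def Z_def)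
  next
    case False
    have i1: "i - 1 \<in> {1..m-1}" using i False by auto
    have si: "\<sigma>' (i - 1) \<in> R'" using bij_betw_apply[OF s' i1] .
    show ?thesis
    proof (cases "j = 1")
      case True
      have "\<not> M (\<sigma>' (i - 1)) c" using si colc by (auto simp: R'_def)
      then show ?thesis using True False i by (simp add: \<sigma>_def \<tau>_def Z_def)
    next
      case False': False
      have j1: "j - 1 \<in> {1..m-1}" using j False' by auto
      have "M (\<sigma>' (i - 1)) (\<tau>' (j - 1)) = Z k (i - 1) (j - 1)" using Z' i1 j1 by blast
      moreover have "Z k (i - 1) (j - 1) = Z (Suc k) i j" using i j False False' by (auto simp: Z_def)
      ultimately show ?thesis using False False' by (simp add: \<sigma>_def \<tau>_def)
    qed
  qed
  then show ?case using s t by blast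
qed

definition W :: "nat \<Rightarrow> nat \<Rightarrow> nat \<Rightarrow> bool" where
  "W k l j = ((l < k \<and> (j = l \<or> j = l + 1)) \<or> (l = k \<and> k \<le> j) \<or> (k < l \<and> j = l))"

lemma prod1:
  assumes k: "k \<le> n" and i: "i \<in> {1..n}" and j: "j \<in> {1..n}"
  shows "odd (card {l \<in> {1..n}. Z k i l \<and> W k l j}) \<longleftrightarrow> i = j"
proof (cases "k < i")
  case True
  then have "{l \<in> {1..n}. Z k i l \<and> W k l j} = (if j = i then {i} else {})"
    using i j by (auto simp: Z_def W_def)
  then show ?thesis by simp
next
  case False
  then have ik: "i \<le> k" by simp
  consider "j < i" | "j = i" | "i < j" "j \<le> k" | "k < j" by linarith
  then show ?thesis
  proof cases
    case 1
    have e: "{l \<in> {1..n}. Z k i l \<and> W k l j} = {}" using ik 1 by (auto simp: Z_def W_def)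
    show ?thesis unfolding e using 1 by simp
  next
    case 2
    then have "{l \<in> {1..n}. Z k i l \<and> W k l j} = {i}" using ik i by (auto simp: Z_def W_def)
    then show ?thesis using 2 by simp
  next
    case 3
    then have "{l \<in> {1..n}. Z k i l \<and> W k l j} = {j - 1, j}" using ik i j by (auto simp: Z_def W_def)
    then show ?thesis using 3 by simp
  next
    case 4
    then have "{l \<in> {1..n}. Z k i l \<and> W k l j} = {k, j}" using ik i j by (auto simp: Z_def W_def)
    then show ?thesis using 4 ik by simp
  qed
qed

lemma prod2:
  assumes k: "k \<le> n" and i: "i \<in> {1..n}" and j: "j \<in> {1..n}"
  shows "odd (card {l \<in> {1..n}. W k i l \<and> Z k l j}) \<longleftrightarrow> i = j"
proof -
  consider "k < i" | "i < k" | "i = k" by linarith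
  then show ?thesis
  proof cases
    case 1
    then have "{l \<in> {1..n}. W k i l \<and> Z k l j} = (if j = i then {i} else {})"
      using i j by (auto simp: Z_def W_def)
    then show ?thesis by simp
  next
    case 2
    consider "j < i" | "j = i" | "i < j" by linarith
    then show ?thesis
    proof cases
      case a: 1
      have e: "{l \<in> {1..n}. W k i l \<and> Z k l j} = {}" using 2 a by (auto simp: Z_def W_def)
      show ?thesis unfolding e using a by simp
    next
      case a: 2
      then have "{l \<in> {1..n}. W k i l \<and> Z k l j} = {i}" using 2 i by (auto simp: Z_def W_def)
      then show ?thesis using a by simp
    next
      case a: 3
      then have "{l \<in> {1..n}. W k i l \<and> Z k l j} = {i, i + 1}" using 2 i k by (auto simp: Z_def W_def)
      then show ?thesis using a by simp
    qed
  next
    case 3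
    consider "j < k" | "j = k" | "k < j" by linarith
    then show ?thesis
    proof cases
      case a: 1
      have e: "{l \<in> {1..n}. W k i l \<and> Z k l j} = {}" using 3 a by (auto simp: Z_def W_def)
      show ?thesis unfolding e using a 3 by simp
    next
      case a: 2
      then have "{l \<in> {1..n}. W k i l \<and> Z k l j} = {k}" using 3 i by (auto simp: Z_def W_def)
      then show ?thesis using a 3 by simp
    next
      case a: 3
      then have "{l \<in> {1..n}. W k i l \<and> Z k l j} = {k, j}" using 3 i j by (auto simp: Z_def W_def)
      then show ?thesis using a 3 by simp
    qed
  qed
qed

definition phi :: "nat \<Rightarrow> nat \<Rightarrow> (nat \<Rightarrow> nat) \<Rightarrow> (nat \<Rightarrow> nat) \<Rightarrow> nat \<Rightarrow> nat \<Rightarrow> bool" where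
  "phi n k c d = (\<lambda>i j. i \<in> {1..n} \<and> j \<in> {1..n} \<and> Z k (c i) (d j))"

lemma phi_GL2:
  assumes k: "k \<le> n" and c: "c permutes {1..n}" and d: "d permutes {1..n}"
  shows "phi n k c d \<in> GL2 n"
proof -
  define \<psi> where "\<psi> = (\<lambda>l j. l \<in> {1..n} \<and> j \<in> {1..n} \<and> W k (d l) (c j))"
  have cin: "\<And>x. c x \<in> {1..n} \<longleftrightarrow> x \<in> {1..n}" using permutes_in_image[OF c] by blast
  have din: "\<And>x. d x \<in> {1..n} \<longleftrightarrow> x \<in> {1..n}" using permutes_in_image[OF d] by blast
  have m1: "phi n k c d \<in> mats n" by (auto simp: mats_def phi_def)
  have m2: "\<psi> \<in> mats n" by (auto simp: mats_def \<psi>_def)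
  have e1: "gf2_mult n (phi n k c d) \<psi> = id_mat n"
  proof (intro ext)
    fix i j
    show "gf2_mult n (phi n k c d) \<psi> i j = id_mat n i j"
    proof (cases "i \<in> {1..n} \<and> j \<in> {1..n}")
      case True
      have "{l \<in> {1..n}. phi n k c d i l \<and> \<psi> l j} = {l \<in> {1..n}. (\<lambda>x. Z k (c i) x \<and> W k x (c j)) (d l)}"
        using True by (auto simp: phi_def \<psi>_def)
      then have "card {l \<in> {1..n}. phi n k c d i l \<and> \<psi> l j} = card {l \<in> {1..n}. Z k (c i) l \<and> W k l (c j)}"
        using card_perm_filter[OF d, of "\<lambda>x. Z k (c i) x \<and> W k x (c j)"] by simp
      moreover have "odd (card {l \<in> {1..n}. Z k (c i) l \<and> W k l (c j)}) \<longleftrightarrow> c i = c j"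
        using prod1[OF k] True cin by blast
      moreover have "c i = c j \<longleftrightarrow> i = j" using permutes_inj[OF c] by (auto dest: injD)
      ultimately show ?thesis using True by (simp add: gf2_mult_def id_mat_def)
    next
      case False then show ?thesis by (auto simp: gf2_mult_def id_mat_def)
    qed
  qed
  have e2: "gf2_mult n \<psi> (phi n k c d) = id_mat n"
  proof (intro ext)
    fix i j
    show "gf2_mult n \<psi> (phi n k c d) i j = id_mat n i j"
    proof (cases "i \<in> {1..n} \<and> j \<in> {1..n}")
      case True
      have "{l \<in> {1..n}. \<psi> i l \<and> phi n k c d l j} = {l \<in> {1..n}. (\<lambda>x. W k (d i) x \<and> Z k x (d j)) (c l)}"
        using True by (auto simp: phi_def \<psi>_def)
      then have "card {l \<in> {1..n}. \<psi> i l \<and> phi n k c d l j} = card {l \<in> {1..n}. W k (d i) l \<and> Z k l (d j)}"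
        using card_perm_filter[OF c, of "\<lambda>x. W k (d i) x \<and> Z k x (d j)"] by simp
      moreover have "odd (card {l \<in> {1..n}. W k (d i) l \<and> Z k l (d j)}) \<longleftrightarrow> d i = d j"
        using prod2[OF k] True din by blast
      moreover have "d i = d j \<longleftrightarrow> i = j" using permutes_inj[OF d] by (auto dest: injD)
      ultimately show ?thesis using True by (simp add: gf2_mult_def id_mat_def)
    next
      case False then show ?thesis by (auto simp: gf2_mult_def id_mat_def)
    qed
  qed
  show ?thesis unfolding GL2_def using m1 m2 e1 e2 by blast
qed

definition rs0 :: "nat \<Rightarrow> nat \<Rightarrow> nat \<Rightarrow> nat" where "rs0 n k i = (if i \<le> k then n + 1 - i else 1)"
definition cs0 :: "nat \<Rightarrow> nat \<Rightarrow> nat" where "cs0 k j = (if j \<le> k then j else k + 1)"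

definition LR :: "nat \<Rightarrow> nat \<Rightarrow> nat list" where
  "LR n k = map (\<lambda>i. n - i) [0..<k] @ replicate (n - k) 1"
definition LC :: "nat \<Rightarrow> nat \<Rightarrow> nat list" where
  "LC n k = replicate (n - k) (k + 1) @ map (\<lambda>i. k - i) [0..<k]"

lemma map_rs0: assumes "k \<le> n" shows "map (rs0 n k) [1..<n+1] = LR n k"
  by (rule nth_equalityI) (use assms in \<open>auto simp: LR_def rs0_def nth_append\<close>)

lemma map_cs0: assumes "k \<le> n" shows "mset (map (cs0 k) [1..<n+1]) = mset (LC n k)"
proof -
  have a: "map (cs0 k) [1..<n+1] = map (\<lambda>i. i + 1) [0..<k] @ replicate (n - k) (k + 1)"
    by (rule nth_equalityI) (use assms in \<open>auto simp: cs0_def nth_append\<close>)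
  have b: "map (\<lambda>i. k - i) [0..<k] = rev (map (\<lambda>i. i + 1) [0..<k])"
    by (rule nth_equalityI) (auto simp: rev_nth)
  show ?thesis unfolding a LC_def b by (simp add: add.commute)
qed

lemma sorted_wrt_rep: "sorted_wrt (\<lambda>x y. y \<le> (x::nat)) (replicate m a)"
  by (induction m) auto

lemma sorted_LR: assumes "k \<le> n" shows "sorted (rev (LR n k))"
  unfolding sorted_wrt_rev LR_def sorted_wrt_append
proof (intro conjI)
  show "sorted_wrt (\<lambda>x y. y \<le> x) (map (\<lambda>i. n - i) [0..<k])"
    unfolding sorted_wrt_map by (rule sorted_wrt_mono_rel[OF _ sorted_wrt_upt]) auto
  show "sorted_wrt (\<lambda>x y. y \<le> x) (replicate (n - k) (1::nat))" by (rule sorted_wrt_rep)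
  show "\<forall>x\<in>set (map (\<lambda>i. n - i) [0..<k]). \<forall>y\<in>set (replicate (n - k) 1). y \<le> x"
    using assms by auto
qed

lemma sorted_LC: shows "sorted (rev (LC n k))"
  unfolding sorted_wrt_rev LC_def sorted_wrt_append
proof (intro conjI)
  show "sorted_wrt (\<lambda>x y. y \<le> x) (map (\<lambda>i. k - i) [0..<k])"
    unfolding sorted_wrt_map by (rule sorted_wrt_mono_rel[OF _ sorted_wrt_upt]) auto
  show "sorted_wrt (\<lambda>x y. y \<le> x) (replicate (n - k) (k + 1))" by (rule sorted_wrt_rep)
  show "\<forall>x\<in>set (replicate (n - k) (k + 1)). \<forall>y\<in>set (map (\<lambda>i. k - i) [0..<k]). y \<le> x"
    by auto
qed

lemma rev_sort_eq:
  assumes "mset xs = mset L" "sorted (rev L)"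
  shows "rev (sort xs) = L"
proof -
  have "sort xs = rev L" using assms by (intro properties_for_sort) auto
  then show ?thesis by simp
qed

lemma mset_map_upt: "mset (map f [1..<n+1]) = image_mset f (mset_set {1..n})"
proof -
  have e: "{1..<n+1} = {1..n}" by auto
  show ?thesis by (simp only: mset_map mset_upt e)
qed

lemma phi_eta:
  assumes k: "k \<le> n" and c: "c permutes {1..n}" and d: "d permutes {1..n}"
  shows "eta n (phi n k c d) = LR n k"
proof -
  have rs: "row_sum n (phi n k c d) i = rs0 n k (c i)" if i: "i \<in> {1..n}" for i
  proof -
    have "row_sum n (phi n k c d) i = card {j \<in> {1..n}. Z k (c i) (d j)}"
      unfolding row_sum_def phi_def using i by (intro arg_cong[where f=card]) auto
    also have "\<dots> = card {j \<in> {1..n}. Z k (c i) j}" by (rule card_perm_filter[OF d])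
    also have "\<dots> = rs0 n k (c i)" using Z_row[OF _ k, of "c i"] permutes_in_image[OF c] i
      by (simp add: rs0_def)
    finally show ?thesis .
  qed
  have "mset (map (row_sum n (phi n k c d)) [1..<n+1]) = image_mset (row_sum n (phi n k c d)) (mset_set {1..n})"
    by (rule mset_map_upt)
  also have "\<dots> = image_mset (rs0 n k) (mset_set {1..n})"
    by (rule permutes_implies_image_mset_eq[OF c, symmetric]) (rule rs)
  also have "\<dots> = mset (LR n k)" using map_rs0[OF k] mset_map_upt[of "rs0 n k" n] by simp
  finally show ?thesis unfolding eta_def using sorted_LR[OF k] by (intro rev_sort_eq)
qed

lemma phi_theta:
  assumes k: "k \<le> n" and c: "c permutes {1..n}" and d: "d permutes {1..n}"
  shows "theta n (phi n k c d) = LC n k"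
proof -
  have cs: "col_sum n (phi n k c d) j = cs0 k (d j)" if j: "j \<in> {1..n}" for j
  proof -
    have "col_sum n (phi n k c d) j = card {i \<in> {1..n}. (\<lambda>x. Z k x (d j)) (c i)}"
      unfolding col_sum_def phi_def using j by (intro arg_cong[where f=card]) auto
    also have "\<dots> = card {i \<in> {1..n}. Z k i (d j)}" by (rule card_perm_filter[OF c])
    also have "\<dots> = cs0 k (d j)" using Z_col[OF _ k, of "d j"] permutes_in_image[OF d] j
      by (simp add: cs0_def)
    finally show ?thesis .
  qed
  have "mset (map (col_sum n (phi n k c d)) [1..<n+1]) = image_mset (col_sum n (phi n k c d)) (mset_set {1..n})"
    by (rule mset_map_upt)
  also have "\<dots> = image_mset (cs0 k) (mset_set {1..n})"
    by (rule permutes_implies_image_mset_eq[OF d, symmetric]) (rule cs)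
  also have "\<dots> = mset (LC n k)" using map_cs0[OF k] mset_map_upt[of "cs0 k" n] by simp
  finally show ?thesis unfolding theta_def using sorted_LC by (intro rev_sort_eq)
qed

lemma act_formula:
  assumes A: "A \<in> mats n" and p: "p permutes {1..n}" and s: "s permutes {1..n}"
  shows "act n p s A = (\<lambda>i j. i \<in> {1..n} \<and> j \<in> {1..n} \<and> A (inv p i) (inv s j))"
proof -
  have ip: "inv p permutes {1..n}" using permutes_inv[OF p] .
  have is': "inv s permutes {1..n}" using permutes_inv[OF s] .
  have inner: "gf2_mult n (perm_mat n p) A = (\<lambda>i j. i \<in> {1..n} \<and> j \<in> {1..n} \<and> A (inv p i) j)"
  proof (intro ext)
    fix i j
    show "gf2_mult n (perm_mat n p) A i j = (i \<in> {1..n} \<and> j \<in> {1..n} \<and> A (inv p i) j)"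
    proof (cases "i \<in> {1..n} \<and> j \<in> {1..n}")
      case True
      have m: "inv p i \<in> {1..n}" using True permutes_in_image[OF ip] by blast
      have "{l \<in> {1..n}. perm_mat n p i l \<and> A l j} = (if A (inv p i) j then {inv p i} else {})"
        using True m permutes_inverses[OF p] unfolding perm_mat_def by auto
      then show ?thesis using True by (simp add: gf2_mult_def)
    next
      case False then show ?thesis by (auto simp: gf2_mult_def)
    qed
  qed
  show ?thesis
  proof (intro ext)
    fix i j
    show "act n p s A i j = (i \<in> {1..n} \<and> j \<in> {1..n} \<and> A (inv p i) (inv s j))"
    proof (cases "i \<in> {1..n} \<and> j \<in> {1..n}")
      case True
      have m: "inv s j \<in> {1..n}" using True permutes_in_image[OF is'] by blast
      have "{l \<in> {1..n}. gf2_mult n (perm_mat n p) A i l \<and> perm_mat n (inv s) l j}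
          = (if A (inv p i) (inv s j) then {inv s j} else {})"
        using True m unfolding inner by (auto simp: perm_mat_def)
      then show ?thesis using True by (simp add: act_def gf2_mult_def)
    next
      case False then show ?thesis by (auto simp: act_def gf2_mult_def)
    qed
  qed
qed

lemma phi_eq_iff:
  assumes k: "k \<le> n" and c: "c permutes {1..n}" and d: "d permutes {1..n}"
    and c0: "c0 permutes {1..n}" and d0: "d0 permutes {1..n}"
  shows "phi n k c d = phi n k c0 d0 \<longleftrightarrow> (\<exists>t. t permutes {k+1..n} \<and> c = t \<circ> c0 \<and> d = t \<circ> d0)"
proof -
  let ?u = "c \<circ> inv c0" and ?v = "d \<circ> inv d0"
  have u: "?u permutes {1..n}" by (rule permutes_compose[OF permutes_inv[OF c0] c])
  have v: "?v permutes {1..n}" by (rule permutes_compose[OF permutes_inv[OF d0] d])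
  have c0in: "\<And>x. c0 x \<in> {1..n} \<longleftrightarrow> x \<in> {1..n}" using permutes_in_image[OF c0] by blast
  have d0in: "\<And>x. d0 x \<in> {1..n} \<longleftrightarrow> x \<in> {1..n}" using permutes_in_image[OF d0] by blast
  have ic0in: "\<And>x. inv c0 x \<in> {1..n} \<longleftrightarrow> x \<in> {1..n}" using permutes_in_image[OF permutes_inv[OF c0]] by blast
  have id0in: "\<And>x. inv d0 x \<in> {1..n} \<longleftrightarrow> x \<in> {1..n}" using permutes_in_image[OF permutes_inv[OF d0]] by blast
  have "phi n k c d = phi n k c0 d0 \<longleftrightarrow> (\<forall>i\<in>{1..n}. \<forall>j\<in>{1..n}. Z k (c i) (d j) = Z k (c0 i) (d0 j))"
  proof
    assume e: "phi n k c d = phi n k c0 d0"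
    show "\<forall>i\<in>{1..n}. \<forall>j\<in>{1..n}. Z k (c i) (d j) = Z k (c0 i) (d0 j)"
    proof (intro ballI)
      fix i j assume i: "i \<in> {1..n}" and j: "j \<in> {1..n}"
      have "phi n k c d i j = phi n k c0 d0 i j" using e by simp
      then show "Z k (c i) (d j) = Z k (c0 i) (d0 j)" using i j by (simp add: phi_def)
    qed
  next
    assume e: "\<forall>i\<in>{1..n}. \<forall>j\<in>{1..n}. Z k (c i) (d j) = Z k (c0 i) (d0 j)"
    show "phi n k c d = phi n k c0 d0"
    proof (intro ext)
      fix i j show "phi n k c d i j = phi n k c0 d0 i j"
        using e by (cases "i \<in> {1..n} \<and> j \<in> {1..n}") (auto simp: phi_def)
    qed
  qed
  also have "\<dots> \<longleftrightarrow> (\<forall>i\<in>{1..n}. \<forall>j\<in>{1..n}. Z k (?u i) (?v j) = Z k i j)"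
  proof
    assume H: "\<forall>i\<in>{1..n}. \<forall>j\<in>{1..n}. Z k (c i) (d j) = Z k (c0 i) (d0 j)"
    show "\<forall>i\<in>{1..n}. \<forall>j\<in>{1..n}. Z k (?u i) (?v j) = Z k i j"
    proof (intro ballI)
      fix i j assume i: "i \<in> {1..n}" and j: "j \<in> {1..n}"
      have "Z k (c (inv c0 i)) (d (inv d0 j)) = Z k (c0 (inv c0 i)) (d0 (inv d0 j))"
        using H i j ic0in id0in by blast
      then show "Z k (?u i) (?v j) = Z k i j" using permutes_inverses[OF c0] permutes_inverses[OF d0] by simp
    qed
  next
    assume H: "\<forall>i\<in>{1..n}. \<forall>j\<in>{1..n}. Z k (?u i) (?v j) = Z k i j"
    show "\<forall>i\<in>{1..n}. \<forall>j\<in>{1..n}. Z k (c i) (d j) = Z k (c0 i) (d0 j)"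
    proof (intro ballI)
      fix i j assume i: "i \<in> {1..n}" and j: "j \<in> {1..n}"
      have "Z k (?u (c0 i)) (?v (d0 j)) = Z k (c0 i) (d0 j)"
        using H i j c0in d0in by blast
      then show "Z k (c i) (d j) = Z k (c0 i) (d0 j)" using permutes_inverses[OF c0] permutes_inverses[OF d0] by simp
    qed
  qed
  also have "\<dots> \<longleftrightarrow> ?u = ?v \<and> ?u permutes {k+1..n}" by (rule stab0[OF u v k])
  also have "\<dots> \<longleftrightarrow> (\<exists>t. t permutes {k+1..n} \<and> c = t \<circ> c0 \<and> d = t \<circ> d0)"
  proof
    assume a: "?u = ?v \<and> ?u permutes {k+1..n}"
    have "c = ?u \<circ> c0" by (rule ext) (simp add: permutes_inverses[OF c0])
    moreover have "d = ?v \<circ> d0" by (rule ext) (simp add: permutes_inverses[OF d0])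
    ultimately show "\<exists>t. t permutes {k+1..n} \<and> c = t \<circ> c0 \<and> d = t \<circ> d0" using a by metis
  next
    assume "\<exists>t. t permutes {k+1..n} \<and> c = t \<circ> c0 \<and> d = t \<circ> d0"
    then obtain t where t: "t permutes {k+1..n}" "c = t \<circ> c0" "d = t \<circ> d0" by blast
    have "?u = t" using t(2) by (intro ext) (simp add: permutes_inverses[OF c0])
    moreover have "?v = t" using t(3) by (intro ext) (simp add: permutes_inverses[OF d0])
    ultimately show "?u = ?v \<and> ?u permutes {k+1..n}" using t(1) by simp
  qed
  finally show ?thesis .
qed

lemma act_phi:
  assumes c: "c permutes {1..n}" and d: "d permutes {1..n}"
    and p: "p permutes {1..n}" and s: "s permutes {1..n}"
  shows "act n p s (phi n k c d) = phi n k (c \<circ> inv p) (d \<circ> inv s)"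
proof -
  have m: "phi n k c d \<in> mats n" by (auto simp: mats_def phi_def)
  have ip: "\<And>x. inv p x \<in> {1..n} \<longleftrightarrow> x \<in> {1..n}" using permutes_in_image[OF permutes_inv[OF p]] by blast
  have is': "\<And>x. inv s x \<in> {1..n} \<longleftrightarrow> x \<in> {1..n}" using permutes_in_image[OF permutes_inv[OF s]] by blast
  show ?thesis unfolding act_formula[OF m p s]
  proof (intro ext)
    fix i j
    show "(i \<in> {1..n} \<and> j \<in> {1..n} \<and> phi n k c d (inv p i) (inv s j)) = phi n k (c \<circ> inv p) (d \<circ> inv s) i j"
    proof (cases "i \<in> {1..n} \<and> j \<in> {1..n}")
      case True
      then have "inv p i \<in> {1..n}" "inv s j \<in> {1..n}" using ip is' by auto
      then show ?thesis using True by (simp add: phi_def)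
    next
      case False then show ?thesis by (auto simp: phi_def)
    qed
  qed
qed

lemma bij_to_perm:
  assumes "bij_betw \<sigma> S S"
  shows "\<exists>\<sigma>'. \<sigma>' permutes S \<and> (\<forall>x\<in>S. \<sigma>' x = \<sigma> x)"
proof -
  let ?s = "\<lambda>x. if x \<in> S then \<sigma> x else x"
  have "bij_betw ?s S S" using assms by (rule bij_betw_cong[THEN iffD1, rotated]) auto
  then have "?s permutes S" by (rule bij_imp_permutes) auto
  then show ?thesis by auto
qed

lemma H_char:
  assumes k: "k \<le> n"
  shows "H n k = {phi n k c d | c d. c permutes {1..n} \<and> d permutes {1..n}}"
proof (intro equalityI subsetI)
  fix A assume "A \<in> {phi n k c d | c d. c permutes {1..n} \<and> d permutes {1..n}}"
  then obtain c d where c: "c permutes {1..n}" and d: "d permutes {1..n}" and A: "A = phi n k c d" by blast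
  show "A \<in> H n k" unfolding H_def A
    using phi_GL2[OF k c d] phi_eta[OF k c d] phi_theta[OF k c d] by (simp add: LR_def LC_def)
next
  fix A assume A: "A \<in> H n k"
  then have mA: "A \<in> mats n" and eA: "eta n A = LR n k" and tA: "theta n A = LC n k"
    unfolding H_def GL2_def LR_def LC_def by auto
  have r: "image_mset (\<lambda>i. card {j \<in> {1..n}. A i j}) (mset_set {1..n}) = mset (LR n k)"
  proof -
    have "mset (LR n k) = mset (map (row_sum n A) [1..<n+1])" unfolding eA[symmetric] eta_def by simp
    also have "\<dots> = image_mset (row_sum n A) (mset_set {1..n})" by (rule mset_map_upt)
    finally show ?thesis unfolding row_sum_def by simp
  qed
  have cc: "image_mset (\<lambda>j. card {i \<in> {1..n}. A i j}) (mset_set {1..n}) = mset (LC n k)"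
  proof -
    have "mset (LC n k) = mset (map (col_sum n A) [1..<n+1])" unfolding tA[symmetric] theta_def by simp
    also have "\<dots> = image_mset (col_sum n A) (mset_set {1..n})" by (rule mset_map_upt)
    finally show ?thesis unfolding col_sum_def by simp
  qed
  obtain \<sigma> \<tau> where s: "bij_betw \<sigma> {1..n} {1..n}" and t: "bij_betw \<tau> {1..n} {1..n}"
    and Zs: "\<forall>i\<in>{1..n}. \<forall>j\<in>{1..n}. A (\<sigma> i) (\<tau> j) = Z k i j"
    using struct[of "{1..n}" "{1..n}" n k A] k r cc unfolding LR_def LC_def by auto
  obtain \<sigma>' where s': "\<sigma>' permutes {1..n}" "\<forall>x\<in>{1..n}. \<sigma>' x = \<sigma> x" using bij_to_perm[OF s] by blast
  obtain \<tau>' where t': "\<tau>' permutes {1..n}" "\<forall>x\<in>{1..n}. \<tau>' x = \<tau> x" using bij_to_perm[OF t] by blast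
  have is': "\<And>x. inv \<sigma>' x \<in> {1..n} \<longleftrightarrow> x \<in> {1..n}" using permutes_in_image[OF permutes_inv[OF s'(1)]] by blast
  have it': "\<And>x. inv \<tau>' x \<in> {1..n} \<longleftrightarrow> x \<in> {1..n}" using permutes_in_image[OF permutes_inv[OF t'(1)]] by blast
  have "A = phi n k (inv \<sigma>') (inv \<tau>')"
  proof (intro ext)
    fix i j
    show "A i j = phi n k (inv \<sigma>') (inv \<tau>') i j"
    proof (cases "i \<in> {1..n} \<and> j \<in> {1..n}")
      case True
      have "Z k (inv \<sigma>' i) (inv \<tau>' j) = A (\<sigma> (inv \<sigma>' i)) (\<tau> (inv \<tau>' j))" using Zs True is' it' by auto
      also have "\<dots> = A (\<sigma>' (inv \<sigma>' i)) (\<tau>' (inv \<tau>' j))" using s'(2) t'(2) True is' it' by auto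
      also have "\<dots> = A i j" using permutes_inverses[OF s'(1)] permutes_inverses[OF t'(1)] by simp
      finally show ?thesis using True by (simp add: phi_def)
    next
      case False then show ?thesis using mA by (auto simp: mats_def phi_def)
    qed
  qed
  then show "A \<in> {phi n k c d | c d. c permutes {1..n} \<and> d permutes {1..n}}"
    using permutes_inv[OF s'(1)] permutes_inv[OF t'(1)] by blast
qed

definition YF :: "nat \<Rightarrow> int list \<Rightarrow> (nat \<Rightarrow> nat) \<Rightarrow> (nat \<Rightarrow> nat) set" where
  "YF n al sg = {f \<in> {1..n} \<rightarrow>\<^sub>E {0..<length al}.
          (\<forall>i < length al. int (card {x \<in> {1..n}. f x = i}) = al ! i) \<and>
          (\<forall>x \<in> {1..n}. f (sg x) = f x)}"

lemma YF_le:
  assumes c: "c permutes {1..n}" and p: "p permutes {1..n}"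
  shows "card (YF n al p) \<le> card (YF n al (inv c \<circ> p \<circ> c))"
proof -
  let ?g = "\<lambda>f. restrict (f \<circ> c) {1..n}"
  have fin: "finite (YF n al (inv c \<circ> p \<circ> c))"
    unfolding YF_def by (rule finite_subset[of _ "{1..n} \<rightarrow>\<^sub>E {0..<length al}"]) (auto intro: finite_PiE)
  have cin: "\<And>x. c x \<in> {1..n} \<longleftrightarrow> x \<in> {1..n}" using permutes_in_image[OF c] by blast
  have pin: "\<And>x. p x \<in> {1..n} \<longleftrightarrow> x \<in> {1..n}" using permutes_in_image[OF p] by blast
  have inj: "inj_on ?g (YF n al p)"
  proof (rule inj_onI)
    fix f f' assume f: "f \<in> YF n al p" and f': "f' \<in> YF n al p" and eq: "?g f = ?g f'"
    show "f = f'"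
    proof (rule ext)
      fix y
      show "f y = f' y"
      proof (cases "y \<in> {1..n}")
        case True
        have "inv c y \<in> {1..n}" using True permutes_in_image[OF permutes_inv[OF c]] by blast
        then have "?g f (inv c y) = ?g f' (inv c y)" using eq by simp
        then show ?thesis using \<open>inv c y \<in> {1..n}\<close> permutes_inverses[OF c] by simp
      next
        case False then show ?thesis using f f' unfolding YF_def by (auto simp: PiE_def extensional_def)
      qed
    qed
  qed
  have maps: "?g ` YF n al p \<subseteq> YF n al (inv c \<circ> p \<circ> c)"
  proof
    fix h assume "h \<in> ?g ` YF n al p"
    then obtain f where f: "f \<in> YF n al p" and h: "h = ?g f" by blast
    have fP: "f \<in> {1..n} \<rightarrow>\<^sub>E {0..<length al}" and ff: "\<forall>i < length al. int (card {x \<in> {1..n}. f x = i}) = al ! i"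
      and fc: "\<forall>x \<in> {1..n}. f (p x) = f x" using f unfolding YF_def by auto
    have "h \<in> {1..n} \<rightarrow>\<^sub>E {0..<length al}" using fP cin unfolding h by (auto simp: PiE_def Pi_def)
    moreover have "int (card {x \<in> {1..n}. h x = i}) = al ! i" if "i < length al" for i
    proof -
      have "c ` {x \<in> {1..n}. h x = i} = {y \<in> {1..n}. f y = i}"
      proof (intro equalityI subsetI)
        fix y assume "y \<in> c ` {x \<in> {1..n}. h x = i}"
        then obtain x where x: "x \<in> {1..n}" "h x = i" "y = c x" by blast
        then have "f (c x) = i" unfolding h by simp
        moreover have "c x \<in> {1..n}" using x(1) cin by blast
        ultimately show "y \<in> {y \<in> {1..n}. f y = i}" using x(3) by blast
      next
        fix y assume y: "y \<in> {y \<in> {1..n}. f y = i}"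
        then have "inv c y \<in> {1..n}" using permutes_in_image[OF permutes_inv[OF c]] by auto
        moreover have "c (inv c y) = y" using permutes_inverses[OF c] by simp
        moreover have "h (inv c y) = i" using y \<open>inv c y \<in> {1..n}\<close> \<open>c (inv c y) = y\<close> unfolding h by simp
        ultimately show "y \<in> c ` {x \<in> {1..n}. h x = i}"
          by (intro image_eqI[where x="inv c y"]) auto
      qed
      moreover have "card (c ` {x \<in> {1..n}. h x = i}) = card {x \<in> {1..n}. h x = i}"
        using permutes_inj_on[OF c] by (rule card_image)
      ultimately have "card {x \<in> {1..n}. h x = i} = card {y \<in> {1..n}. f y = i}"
        by simp
      then show ?thesis using ff that by simp
    qed
    moreover have "h ((inv c \<circ> p \<circ> c) x) = h x" if x: "x \<in> {1..n}" for x
    proof -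
      have "(inv c \<circ> p \<circ> c) x \<in> {1..n}" using x cin pin permutes_in_image[OF permutes_inv[OF c]] by auto
      then have "h ((inv c \<circ> p \<circ> c) x) = f (c (inv c (p (c x))))" unfolding h by simp
      also have "\<dots> = f (p (c x))" using permutes_inverses[OF c] by simp
      also have "\<dots> = f (c x)" using fc x cin by blast
      finally show ?thesis unfolding h using x by simp
    qed
    ultimately show "h \<in> YF n al (inv c \<circ> p \<circ> c)" unfolding YF_def by blast
  qed
  show ?thesis using card_inj_on_le[OF inj maps fin] .
qed

lemma YF_eq:
  assumes c: "c permutes {1..n}" and p: "p permutes {1..n}"
  shows "card (YF n al (inv c \<circ> p \<circ> c)) = card (YF n al p)"
proof -
  have ic: "inv c permutes {1..n}" using permutes_inv[OF c] .
  have q: "inv c \<circ> p \<circ> c permutes {1..n}"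
    using permutes_compose[OF permutes_compose[OF c p] ic] by (simp add: o_assoc)
  have "inv (inv c) \<circ> (inv c \<circ> p \<circ> c) \<circ> inv c = p"
  proof (rule ext)
    fix x show "(inv (inv c) \<circ> (inv c \<circ> p \<circ> c) \<circ> inv c) x = p x"
      using inv_inv_eq[OF permutes_bij[OF c]] permutes_inverses[OF c] by simp
  qed
  then have "card (YF n al (inv c \<circ> p \<circ> c)) \<le> card (YF n al p)"
    using YF_le[OF ic q, of al] by simp
  then show ?thesis using YF_le[OF c p, of al] by simp
qed

lemma ypc_conj:
  assumes c: "c permutes {1..n}" and p: "p permutes {1..n}"
  shows "young_perm_char n al (inv c \<circ> p \<circ> c) = young_perm_char n al p"
  using YF_eq[OF c p, of al] unfolding young_perm_char_def YF_def by simp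

lemma irr_conj:
  assumes c: "c permutes {1..n}" and p: "p permutes {1..n}"
  shows "irr_char n la (inv c \<circ> p \<circ> c) = irr_char n la p"
  unfolding irr_char_def using ypc_conj[OF c p] by simp

lemma inv_conj_eq:
  assumes c: "c permutes {1..n}" and p: "p permutes {1..n}" and t: "bij t"
  shows "c \<circ> inv p = t \<circ> c \<longleftrightarrow> p = inv c \<circ> inv t \<circ> c"
proof
  assume e: "c \<circ> inv p = t \<circ> c"
  show "p = inv c \<circ> inv t \<circ> c"
  proof (rule ext)
    fix x
    have "c (inv p (p x)) = t (c (p x))" using e by (metis comp_apply)
    then have "c x = t (c (p x))" using permutes_inverses[OF p] by simp
    then have "inv t (c x) = inv t (t (c (p x)))" by simp
    also have "\<dots> = c (p x)" using t by (simp add: inv_f_f bij_is_inj)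
    finally have "inv t (c x) = c (p x)" .
    then show "p x = (inv c \<circ> inv t \<circ> c) x" using permutes_inverses[OF c] by simp
  qed
next
  assume e: "p = inv c \<circ> inv t \<circ> c"
  show "c \<circ> inv p = t \<circ> c"
  proof (rule ext)
    fix y
    let ?z = "inv p y"
    have "p ?z = y" using permutes_inverses[OF p] by simp
    then have "inv c (inv t (c ?z)) = y" using e by simp
    then have "inv t (c ?z) = c y" using permutes_inverses[OF c] by (metis)
    then have "c ?z = t (c y)" using t by (metis bij_inv_eq_iff)
    then show "(c \<circ> inv p) y = (t \<circ> c) y" by simp
  qed
qed

lemma stab_sum:
  assumes k: "k \<le> n" and c: "c permutes {1..n}" and d: "d permutes {1..n}"
  shows "(\<Sum>p\<in>{p. p permutes {1..n}}. \<Sum>s\<in>{s. s permutes {1..n}}.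
            real_of_int (irr_char n la p * irr_char n mu s) *
            (if act n p s (phi n k c d) = phi n k c d then 1 else 0))
       = (\<Sum>t\<in>{t. t permutes {k+1..n}}. real_of_int (irr_char n la t * irr_char n mu t))"
proof -
  let ?S = "{p. p permutes {1..n}}"
  let ?T = "{t. t permutes {k+1..n}}"
  let ?F = "\<lambda>(p, s). real_of_int (irr_char n la p * irr_char n mu s)"
  let ?g = "\<lambda>t. (inv c \<circ> t \<circ> c, inv d \<circ> t \<circ> d)"
  have TS: "\<And>t. t permutes {k+1..n} \<Longrightarrow> t permutes {1..n}" by (erule permutes_subset) auto
  have finS: "finite ?S" by (rule finite_permutations) simp
  have cond: "act n p s (phi n k c d) = phi n k c d \<longleftrightarrow> (p, s) \<in> ?g ` ?T"
    if p: "p permutes {1..n}" and s: "s permutes {1..n}" for p s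
  proof -
    have cp: "c \<circ> inv p permutes {1..n}" by (rule permutes_compose[OF permutes_inv[OF p] c])
    have ds: "d \<circ> inv s permutes {1..n}" by (rule permutes_compose[OF permutes_inv[OF s] d])
    have "act n p s (phi n k c d) = phi n k c d \<longleftrightarrow>
        (\<exists>t. t permutes {k+1..n} \<and> c \<circ> inv p = t \<circ> c \<and> d \<circ> inv s = t \<circ> d)"
      unfolding act_phi[OF c d p s] by (rule phi_eq_iff[OF k cp ds c d])
    also have "\<dots> \<longleftrightarrow> (\<exists>t. t permutes {k+1..n} \<and> p = inv c \<circ> inv t \<circ> c \<and> s = inv d \<circ> inv t \<circ> d)"
      using inv_conj_eq[OF c p] inv_conj_eq[OF d s] permutes_bij by blast
    also have "\<dots> \<longleftrightarrow> (\<exists>t. t permutes {k+1..n} \<and> p = inv c \<circ> t \<circ> c \<and> s = inv d \<circ> t \<circ> d)"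
    proof
      assume "\<exists>t. t permutes {k+1..n} \<and> p = inv c \<circ> inv t \<circ> c \<and> s = inv d \<circ> inv t \<circ> d"
      then show "\<exists>t. t permutes {k+1..n} \<and> p = inv c \<circ> t \<circ> c \<and> s = inv d \<circ> t \<circ> d"
        using permutes_inv by blast
    next
      assume "\<exists>t. t permutes {k+1..n} \<and> p = inv c \<circ> t \<circ> c \<and> s = inv d \<circ> t \<circ> d"
      then obtain t where t: "t permutes {k+1..n}" "p = inv c \<circ> t \<circ> c" "s = inv d \<circ> t \<circ> d" by blast
      have "inv (inv t) = t" using inv_inv_eq[OF permutes_bij[OF t(1)]] .
      then show "\<exists>t. t permutes {k+1..n} \<and> p = inv c \<circ> inv t \<circ> c \<and> s = inv d \<circ> inv t \<circ> d"
        using t permutes_inv[OF t(1)] by metis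
    qed
    also have "\<dots> \<longleftrightarrow> (p, s) \<in> ?g ` ?T" by auto
    finally show ?thesis .
  qed
  have gS: "?g ` ?T \<subseteq> ?S \<times> ?S"
  proof
    fix x assume "x \<in> ?g ` ?T"
    then obtain t where t: "t permutes {k+1..n}" "x = ?g t" by blast
    have "inv c \<circ> t \<circ> c permutes {1..n}"
      using permutes_compose[OF c permutes_compose[OF TS[OF t(1)] permutes_inv[OF c]]] by (simp add: o_assoc)
    moreover have "inv d \<circ> t \<circ> d permutes {1..n}"
      using permutes_compose[OF d permutes_compose[OF TS[OF t(1)] permutes_inv[OF d]]] by (simp add: o_assoc)
    ultimately show "x \<in> ?S \<times> ?S" using t by simp
  qed
  have ginj: "inj_on ?g ?T"
  proof (rule inj_onI)
    fix t t' assume "?g t = ?g t'"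
    then have e: "inv c \<circ> t \<circ> c = inv c \<circ> t' \<circ> c" by simp
    show "t = t'"
    proof (rule ext)
      fix y
      have "inv c (t (c (inv c y))) = inv c (t' (c (inv c y)))" using e by (metis comp_apply)
      then show "t y = t' y" using permutes_inverses[OF c] by (metis)
    qed
  qed
  have "(\<Sum>p\<in>?S. \<Sum>s\<in>?S. real_of_int (irr_char n la p * irr_char n mu s) *
            (if act n p s (phi n k c d) = phi n k c d then 1 else 0))
      = (\<Sum>p\<in>?S. \<Sum>s\<in>?S. (if (p, s) \<in> ?g ` ?T then ?F (p, s) else 0))"
    by (intro sum.cong refl) (simp add: cond)
  also have "\<dots> = (\<Sum>x\<in>?S \<times> ?S. (if x \<in> ?g ` ?T then ?F x else 0))"
    unfolding sum.cartesian_product by (intro sum.cong refl) (auto split: prod.splits)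
  also have "\<dots> = sum ?F ((?S \<times> ?S) \<inter> ?g ` ?T)"
    by (rule sum.inter_restrict[OF finite_cartesian_product[OF finS finS], symmetric])
  also have "\<dots> = sum ?F (?g ` ?T)" by (simp only: Int_absorb1[OF gS])
  also have "\<dots> = (\<Sum>t\<in>?T. ?F (?g t))" using sum.reindex[OF ginj, of ?F] by (simp add: o_def)
  also have "\<dots> = (\<Sum>t\<in>?T. real_of_int (irr_char n la t * irr_char n mu t))"
    using irr_conj[OF c TS] irr_conj[OF d TS] by (intro sum.cong refl) simp
  finally show ?thesis .
qed

lemma fiber_card:
  assumes k: "k \<le> n" and c0: "c0 permutes {1..n}" and d0: "d0 permutes {1..n}"
  shows "card {x \<in> {p. p permutes {1..n}} \<times> {p. p permutes {1..n}}.
            (case x of (c, d) \<Rightarrow> phi n k c d) = phi n k c0 d0} = fact (n - k)"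
proof -
  let ?S = "{p. p permutes {1..n}}"
  let ?T = "{t. t permutes {k+1..n}}"
  let ?h = "\<lambda>t. (t \<circ> c0, t \<circ> d0)"
  have TS: "\<And>t. t permutes {k+1..n} \<Longrightarrow> t permutes {1..n}" by (erule permutes_subset) auto
  have eq: "{x \<in> ?S \<times> ?S. (case x of (c, d) \<Rightarrow> phi n k c d) = phi n k c0 d0} = ?h ` ?T"
  proof (intro equalityI subsetI)
    fix x assume x: "x \<in> {x \<in> ?S \<times> ?S. (case x of (c, d) \<Rightarrow> phi n k c d) = phi n k c0 d0}"
    then obtain c d where cd: "x = (c, d)" "c permutes {1..n}" "d permutes {1..n}" "phi n k c d = phi n k c0 d0"
      by auto
    then obtain t where "t permutes {k+1..n}" "c = t \<circ> c0" "d = t \<circ> d0"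
      using phi_eq_iff[OF k cd(2,3) c0 d0] by blast
    then show "x \<in> ?h ` ?T" using cd(1) by blast
  next
    fix x assume "x \<in> ?h ` ?T"
    then obtain t where t: "t permutes {k+1..n}" "x = ?h t" by blast
    have c: "t \<circ> c0 permutes {1..n}" by (rule permutes_compose[OF c0 TS[OF t(1)]])
    have d: "t \<circ> d0 permutes {1..n}" by (rule permutes_compose[OF d0 TS[OF t(1)]])
    have "phi n k (t \<circ> c0) (t \<circ> d0) = phi n k c0 d0"
      using phi_eq_iff[OF k c d c0 d0] t(1) by blast
    then show "x \<in> {x \<in> ?S \<times> ?S. (case x of (c, d) \<Rightarrow> phi n k c d) = phi n k c0 d0}"
      using t(2) c d by simp
  qed
  have inj: "inj_on ?h ?T"
  proof (rule inj_onI)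
    fix t t' assume "?h t = ?h t'"
    then have e: "t \<circ> c0 = t' \<circ> c0" by simp
    show "t = t'"
    proof (rule ext)
      fix y
      have "t (c0 (inv c0 y)) = t' (c0 (inv c0 y))" using e by (metis comp_apply)
      then show "t y = t' y" using permutes_inverses[OF c0] by simp
    qed
  qed
  have "card ?T = fact (n - k)" by (rule card_permutations) auto
  then show ?thesis unfolding eq card_image[OF inj] .
qed

lemma card_H:
  assumes k: "k \<le> n"
  shows "card (H n k) * fact (n - k) = fact n * fact n"
proof -
  let ?S = "{p. p permutes {1..n}}"
  let ?P = "\<lambda>x. case x of (c, d) \<Rightarrow> phi n k c d"
  have finS: "finite ?S" by (rule finite_permutations) simp
  have HP: "H n k = ?P ` (?S \<times> ?S)" unfolding H_char[OF k] by auto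
  have "card (?S \<times> ?S) = sum (\<lambda>_. 1::nat) (?S \<times> ?S)" by (rule card_eq_sum)
  also have "\<dots> = (\<Sum>y\<in>?P ` (?S \<times> ?S). sum (\<lambda>_. 1::nat) {x. x \<in> ?S \<times> ?S \<and> ?P x = y})"
    by (rule sum.image_gen[OF finite_cartesian_product[OF finS finS]])
  also have "\<dots> = (\<Sum>y\<in>?P ` (?S \<times> ?S). card {x. x \<in> ?S \<times> ?S \<and> ?P x = y})"
    by (simp only: card_eq_sum)
  also have "\<dots> = (\<Sum>y\<in>?P ` (?S \<times> ?S). fact (n - k))"
  proof (rule sum.cong[OF refl])
    fix y assume "y \<in> ?P ` (?S \<times> ?S)"
    then obtain c0 d0 where c0: "c0 permutes {1..n}" and d0: "d0 permutes {1..n}" and y: "y = phi n k c0 d0"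
      by auto
    show "card {x. x \<in> ?S \<times> ?S \<and> ?P x = y} = fact (n - k)"
      using fiber_card[OF k c0 d0] unfolding y by simp
  qed
  also have "\<dots> = card (H n k) * fact (n - k)" unfolding HP by simp
  finally have e: "card (?S \<times> ?S) = card (H n k) * fact (n - k)" .
  have cSS: "card (?S \<times> ?S) = fact n * fact n" using card_permutations[of "{1..n}" n] by (simp add: card_cartesian_product)
  show ?thesis unfolding e[symmetric] cSS ..
qed

theorem mainTheorem13:
  fixes n k :: nat and la mu :: "nat list"
  assumes "k \<le> n" and "is_partition n la" and "is_partition n mu"
  shows "mult_H n k la mu = restr_ip n k la mu"
proof -
  have k: "k \<le> n" using assms(1) .
  let ?S = "{p. p permutes {1..n}}"
  let ?T = "{t. t permutes {k+1..n}}"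
  let ?F = "\<lambda>p s. real_of_int (irr_char n la p * irr_char n mu s)"
  define K where "K = (\<Sum>t\<in>?T. real_of_int (irr_char n la t * irr_char n mu t))"
  have finS: "finite ?S" by (rule finite_permutations) simp
  have HP: "H n k = (\<lambda>x. case x of (c, d) \<Rightarrow> phi n k c d) ` (?S \<times> ?S)" unfolding H_char[OF k] by auto
  have finH: "finite (H n k)" unfolding HP using finS by simp
  have cardeq: "real (card {A \<in> H n k. act n p s A = A}) = (\<Sum>A\<in>H n k. if act n p s A = A then 1 else 0)" for p s
    unfolding real_of_card by (rule sum.inter_filter[OF finH])
  have inner: "(\<Sum>p\<in>?S. \<Sum>s\<in>?S. ?F p s * (if act n p s A = A then 1 else 0)) = K" if A: "A \<in> H n k" for A
  proof -
    obtain c d where c: "c permutes {1..n}" and d: "d permutes {1..n}" and Ae: "A = phi n k c d"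
      using A unfolding H_char[OF k] by blast
    show ?thesis unfolding Ae K_def by (rule stab_sum[OF k c d])
  qed
  define G where "G = (\<lambda>p s A. ?F p s * (if act n p s A = A then (1::real) else 0))"
  have "(\<Sum>p\<in>?S. \<Sum>s\<in>?S. ?F p s * real (card {A \<in> H n k. act n p s A = A}))
      = (\<Sum>p\<in>?S. \<Sum>s\<in>?S. \<Sum>A\<in>H n k. G p s A)"
    unfolding G_def by (simp only: cardeq sum_distrib_left)
  also have "\<dots> = (\<Sum>p\<in>?S. \<Sum>A\<in>H n k. \<Sum>s\<in>?S. G p s A)"
  proof (rule sum.cong[OF refl])
    fix p show "(\<Sum>s\<in>?S. \<Sum>A\<in>H n k. G p s A) = (\<Sum>A\<in>H n k. \<Sum>s\<in>?S. G p s A)"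
      by (rule sum.swap[of "G p" "H n k" ?S])
  qed
  also have "\<dots> = (\<Sum>A\<in>H n k. \<Sum>p\<in>?S. \<Sum>s\<in>?S. G p s A)"
    by (rule sum.swap[of "\<lambda>p A. \<Sum>s\<in>?S. G p s A" "H n k" ?S])
  also have "\<dots> = (\<Sum>A\<in>H n k. K)"
  proof (rule sum.cong[OF refl])
    fix A assume "A \<in> H n k"
    then show "(\<Sum>p\<in>?S. \<Sum>s\<in>?S. G p s A) = K" unfolding G_def by (rule inner)
  qed
  also have "\<dots> = real (card (H n k)) * K" by simp
  finally have N: "(\<Sum>p\<in>?S. \<Sum>s\<in>?S. ?F p s * real (card {A \<in> H n k. act n p s A = A})) = real (card (H n k)) * K" .
  have "real (card (H n k) * fact (n - k)) = real (fact n * fact n)" using card_H[OF k] by (rule arg_cong)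
  then have cH: "real (card (H n k)) * real (fact (n - k)) = (real (fact n))^2"
    by (simp only: of_nat_mult power2_eq_square)
  have pos: "real (card (H n k)) \<noteq> 0"
  proof
    assume "real (card (H n k)) = 0"
    then have "(real (fact n))^2 = 0" using cH by simp
    then show False by simp
  qed
  have fpos: "real (fact (n - k)) \<noteq> 0" by simp
  have "mult_H n k la mu = real (card (H n k)) * K / (real (fact n))^2"
    unfolding mult_H_def N ..
  also have "\<dots> = K / real (fact (n - k))" unfolding cH[symmetric] using pos fpos by (simp add: field_simps)
  also have "\<dots> = restr_ip n k la mu" unfolding restr_ip_def K_def ..
  finally show ?thesis .
qed

end
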